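(* Let $A$ be a $\mathbb{G}$-predictable set. Then $A\in\mathcal{L}^o$ if and only if, for every $\mathbb{G}$-optional process $Y$, the process $Y\mathbf{1}_A$ satisfies the global optional splitting formula at $\tau$ with respect to $\mathbb{F}$.
   Context: Let $(\Omega,\mathcal{A},\mathbb{Q})$ be a probability space with a right-continuous filtration $\mathbb{F}=(\mathcal{F}_t)_{t\ge0}$ such that $\mathcal{F}_0$ contains $\mathcal{N}^{\mathcal{F}_\infty}$, where for a $\sigma$-algebra $\mathcal{T}\subset\mathcal{A}$, $\mathcal{N}^{\mathcal{T}}$ denotes the $\sigma$-algebra generated by all subsets of $\mathcal{T}$-measurable $\mathbb{Q}$-null sets. Let $\tau$ be a random variable with values in $[0,\infty]$, let $\mathcal{N}=\mathcal{N}^{\sigma(\tau)\vee\mathcal{F}_\infty}$, and let $\mathbb{G}=(\mathcal{G}_t)_{t\ge0}$ with $\mathcal{G}_t=\mathcal{N}\vee\bigcap_{s>t}(\mathcal{F}_s\vee\sigma(\tau\wedge s))$. Identities between processes are understood up to indistinguishability outside an $\mathcal{N}$-measurable $\mathbb{Q}$-null set. For a function $Y''$ on $[0,\infty]\times(\mathbb{R}_+\times\Omega)$, $Y''(\tau)$ denotes the process $(t,\omega)\mapsto Y''(\tau(\omega),t,\omega)$. A $\mathbb{G}$-optional process $Y$ satisfies the optional splitting formula on a $\mathbb{G}$-optional set $A$ (at $\tau$ with respect to $\mathbb{F}$) if there exist $Y'\in\mathcal{O}(\mathbb{F})$ and a $\mathcal{B}[0,\infty]\otimes\mathcal{O}(\mathbb{F})$-measurable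 function $Y''$ with $Y\mathbf{1}_A=(Y'\mathbf{1}_{[0,\tau)}+Y''(\tau)\mathbf{1}_{[\tau,\infty)})\mathbf{1}_A$; the global optional splitting formula is the case $A=\mathbb{R}_+\times\Omega$. $\mathcal{L}^o$ is the family of $\mathbb{G}$-optional sets $A$ such that every $\mathbb{G}$-optional process satisfies the optional splitting formula on $A$. *)

theory Defs
  imports "HOL-Probability.Probability"
begin

text \<open>The probability space is M (with Omega = space M, A = sets M, Q = M).
  A filtration is a family of set systems F :: real => 'a set set indexed by times t >= 0.
  Processes are real-valued functions on pairs (t, omega); only their values on
  the time domain R_+ x Omega, i.e. {0..} x space M, matter.\<close>

definition timedom :: "'a measure \<Rightarrow> (real \<times> 'a) set" where
  "timedom M = {0..} \<times> space M"

definition is_filtration :: "'a measure \<Rightarrow> (real \<Rightarrow> 'a set set) \<Rightarrow> bool" where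
  "is_filtration M F \<longleftrightarrow>
     (\<forall>t\<ge>0. sigma_algebra (space M) (F t) \<and> F t \<subseteq> sets M) \<and>
     (\<forall>s t. 0 \<le> s \<longrightarrow> s \<le> t \<longrightarrow> F s \<subseteq> F t)"

definition right_continuous_filtration :: "(real \<Rightarrow> 'a set set) \<Rightarrow> bool" where
  "right_continuous_filtration F \<longleftrightarrow> (\<forall>t\<ge>0. F t = (\<Inter>s\<in>{t<..}. F s))"

definition F_infty :: "'a measure \<Rightarrow> (real \<Rightarrow> 'a set set) \<Rightarrow> 'a set set" where
  "F_infty M F = sigma_sets (space M) (\<Union>t\<in>{0..}. F t)"

definition null_gen :: "'a measure \<Rightarrow> 'a set set \<Rightarrow> 'a set set" where
  "null_gen M T = sigma_sets (space M)
     {B. B \<subseteq> space M \<and> (\<exists>Z\<in>T. Z \<in> sets M \<and> emeasure M Z = 0 \<and> B \<subseteq> Z)}"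

definition sjoin :: "'a measure \<Rightarrow> 'a set set \<Rightarrow> 'a set set \<Rightarrow> 'a set set" where
  "sjoin M S T = sigma_sets (space M) (S \<union> T)"

definition sigma_rv :: "'a measure \<Rightarrow> ('a \<Rightarrow> 'b::topological_space) \<Rightarrow> 'a set set" where
  "sigma_rv M X = {X -` B \<inter> space M | B. B \<in> sets borel}"

definition Nsig :: "'a measure \<Rightarrow> (real \<Rightarrow> 'a set set) \<Rightarrow> ('a \<Rightarrow> ennreal) \<Rightarrow> 'a set set" where
  "Nsig M F \<tau> = null_gen M (sjoin M (sigma_rv M \<tau>) (F_infty M F))"

definition Gfilt :: "'a measure \<Rightarrow> (real \<Rightarrow> 'a set set) \<Rightarrow> ('a \<Rightarrow> ennreal) \<Rightarrow> real \<Rightarrow> 'a set set" where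
  "Gfilt M F \<tau> t = sjoin M (Nsig M F \<tau>)
     (\<Inter>s\<in>{t<..}. sjoin M (F s) (sigma_rv M (\<lambda>\<omega>. min (\<tau> \<omega>) (ennreal s))))"

definition adapted :: "'a measure \<Rightarrow> (real \<Rightarrow> 'a set set) \<Rightarrow> (real \<times> 'a \<Rightarrow> real) \<Rightarrow> bool" where
  "adapted M H X \<longleftrightarrow>
     (\<forall>t\<ge>0. \<forall>B\<in>sets borel. {\<omega>\<in>space M. X (t, \<omega>) \<in> B} \<in> H t)"

definition cadlag :: "'a measure \<Rightarrow> (real \<times> 'a \<Rightarrow> real) \<Rightarrow> bool" where
  "cadlag M X \<longleftrightarrow> (\<forall>\<omega>\<in>space M. \<forall>t\<ge>0.
      continuous (at_right t) (\<lambda>s. X (s, \<omega>)) \<and>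
      (t > 0 \<longrightarrow> (\<exists>l. ((\<lambda>s. X (s, \<omega>)) \<longlongrightarrow> l) (at_left t))))"

definition optional_sets :: "'a measure \<Rightarrow> (real \<Rightarrow> 'a set set) \<Rightarrow> (real \<times> 'a) set set" where
  "optional_sets M H = sigma_sets (timedom M)
     {X -` B \<inter> timedom M | X B. cadlag M X \<and> adapted M H X \<and> B \<in> sets borel}"

definition predictable_sets :: "'a measure \<Rightarrow> (real \<Rightarrow> 'a set set) \<Rightarrow> (real \<times> 'a) set set" where
  "predictable_sets M H = sigma_sets (timedom M)
     ({{0} \<times> B | B. B \<in> H 0} \<union> {{s<..t} \<times> B | s t B. 0 \<le> s \<and> s \<le> t \<and> B \<in> H s})"

definition optional_measure :: "'a measure \<Rightarrow> (real \<Rightarrow> 'a set set) \<Rightarrow> (real \<times> 'a) measure" where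
  "optional_measure M H = measure_of (timedom M) (optional_sets M H) (\<lambda>_. 0)"

definition optional_process :: "'a measure \<Rightarrow> (real \<Rightarrow> 'a set set) \<Rightarrow> (real \<times> 'a \<Rightarrow> real) \<Rightarrow> bool" where
  "optional_process M H Y \<longleftrightarrow> (\<forall>B\<in>sets borel. Y -` B \<inter> timedom M \<in> optional_sets M H)"

definition N_null :: "'a measure \<Rightarrow> (real \<Rightarrow> 'a set set) \<Rightarrow> ('a \<Rightarrow> ennreal) \<Rightarrow> 'a set \<Rightarrow> bool" where
  "N_null M F \<tau> E \<longleftrightarrow> E \<in> Nsig M F \<tau> \<and> (\<exists>Z\<in>sets M. emeasure M Z = 0 \<and> E \<subseteq> Z)"

definition splitting_on ::
  "'a measure \<Rightarrow> (real \<Rightarrow> 'a set set) \<Rightarrow> ('a \<Rightarrow> ennreal) \<Rightarrow> (real \<times> 'a \<Rightarrow> real) \<Rightarrow> (real \<times> 'a) set \<Rightarrow> bool" where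
  "splitting_on M F \<tau> Y A \<longleftrightarrow>
     (\<exists>Y' Y''. optional_process M F Y' \<and>
        (\<lambda>(u, p). Y'' u p) \<in> borel_measurable (borel \<Otimes>\<^sub>M optional_measure M F) \<and>
        (\<exists>E. N_null M F \<tau> E \<and>
           (\<forall>\<omega>\<in>space M - E. \<forall>t\<ge>0.
              Y (t, \<omega>) * indicator A (t, \<omega>) =
              (Y' (t, \<omega>) * indicator {p. ennreal (fst p) < \<tau> (snd p)} (t, \<omega>)
               + Y'' (\<tau> \<omega>) (t, \<omega>) * indicator {p. \<tau> (snd p) \<le> ennreal (fst p)} (t, \<omega>))
              * indicator A (t, \<omega>))))"

definition global_splitting ::
  "'a measure \<Rightarrow> (real \<Rightarrow> 'a set set) \<Rightarrow> ('a \<Rightarrow> ennreal) \<Rightarrow> (real \<times> 'a \<Rightarrow> real) \<Rightarrow> bool" where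
  "global_splitting M F \<tau> Y \<longleftrightarrow> splitting_on M F \<tau> Y (timedom M)"

definition L_o :: "'a measure \<Rightarrow> (real \<Rightarrow> 'a set set) \<Rightarrow> ('a \<Rightarrow> ennreal) \<Rightarrow> (real \<times> 'a) set set" where
  "L_o M F \<tau> = {A. A \<in> optional_sets M (Gfilt M F \<tau>) \<and>
     (\<forall>Y. optional_process M (Gfilt M F \<tau>) Y \<longrightarrow> splitting_on M F \<tau> Y A)}"

end

theory Submission
  imports Defs
begin


lemma optional_sa:
  "sigma_algebra (timedom M) (optional_sets M H)"
  unfolding optional_sets_def by (rule sigma_algebra_sigma_sets) auto

lemma space_OM: "space (optional_measure M H) = timedom M"
  unfolding optional_measure_def
  by (rule space_measure_of) (auto simp: optional_sets_def dest: sigma_sets_into_sp[rotated])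

lemma sets_OM: "sets (optional_measure M H) = optional_sets M H"
proof -
  have "optional_sets M H \<subseteq> Pow (timedom M)"
    unfolding optional_sets_def by (auto dest: sigma_sets_into_sp[rotated])
  then have "sets (optional_measure M H) = sigma_sets (timedom M) (optional_sets M H)"
    unfolding optional_measure_def by (rule sets_measure_of)
  also have "\<dots> = optional_sets M H" using sigma_algebra.sigma_sets_eq[OF optional_sa] .
  finally show ?thesis .
qed

lemma optional_process_iff:
  "optional_process M H Y \<longleftrightarrow> Y \<in> borel_measurable (optional_measure M H)"
  unfolding optional_process_def measurable_def space_OM sets_OM by auto

lemma step_cadlag:
  fixes c :: real
  shows "cadlag M (indicator ({c..} \<times> D))"
  unfolding cadlag_def
proof (intro ballI allI impI conjI)
  fix \<omega> and t :: real
  let ?f = "\<lambda>s. indicator ({c..} \<times> D) (s, \<omega>) :: real"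
  show "continuous (at_right t) ?f"
    unfolding continuous_within
  proof (rule tendsto_eventually)
    show "\<forall>\<^sub>F x in at_right t. ?f x = ?f t"
    proof (cases "c \<le> t")
      case True
      then show ?thesis by (intro eventually_at_rightI[of t "t+1"]) (auto simp: indicator_def)
    next
      case False
      then show ?thesis by (intro eventually_at_rightI[of t c]) (auto simp: indicator_def)
    qed
  qed
  show "\<exists>l. (?f \<longlongrightarrow> l) (at_left t)" if "t > 0"
  proof (cases "t \<le> c")
    case True
    have "\<forall>\<^sub>F x in at_left t. ?f x = 0"
      using True by (intro eventually_at_leftI[of "t-1" t]) (auto simp: indicator_def)
    then show ?thesis by (blast intro: tendsto_eventually)
  next
    case False
    have "\<forall>\<^sub>F x in at_left t. ?f x = indicator D \<omega>"
      using False by (intro eventually_at_leftI[of c t]) (auto simp: indicator_def)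
    then show ?thesis by (blast intro: tendsto_eventually)
  qed
qed



definition FL :: "'a measure \<Rightarrow> (real \<Rightarrow> 'a set set) \<Rightarrow> bool" where
  "FL M H \<longleftrightarrow> (\<forall>t\<ge>0. sigma_algebra (space M) (H t)) \<and> (\<forall>s t. 0 \<le> s \<longrightarrow> s \<le> t \<longrightarrow> H s \<subseteq> H t)"

lemma FL_sa: "FL M H \<Longrightarrow> 0 \<le> t \<Longrightarrow> sigma_algebra (space M) (H t)"
  unfolding FL_def by auto

lemma FL_mono: "FL M H \<Longrightarrow> 0 \<le> s \<Longrightarrow> s \<le> t \<Longrightarrow> D \<in> H s \<Longrightarrow> D \<in> H t"
  unfolding FL_def by auto

lemma FL_sub: "FL M H \<Longrightarrow> 0 \<le> s \<Longrightarrow> D \<in> H s \<Longrightarrow> D \<subseteq> space M"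
  using FL_sa[of M H s] unfolding sigma_algebra_iff2 by auto

lemma step_adapted:
  assumes FL: "FL M H" and c': "0 \<le> c'" "c' \<le> c" and D: "D \<in> H c'"
  shows "adapted M H (indicator ({c..} \<times> D))"
  unfolding adapted_def
proof (intro allI impI ballI)
  fix t :: real and B :: "real set" assume t: "0 \<le> t" and B: "B \<in> sets borel"
  interpret sa: sigma_algebra "space M" "H t" using FL_sa[OF FL t] .
  show "{\<omega> \<in> space M. indicator ({c..} \<times> D) (t, \<omega>) \<in> B} \<in> H t"
  proof (cases "c \<le> t")
    case True
    have Dt: "D \<in> H t" using FL_mono[OF FL c'(1) _ D] c' True by auto
    have "{\<omega> \<in> space M. indicator ({c..} \<times> D) (t, \<omega>) \<in> B} =
      (if 1 \<in> B then D else {}) \<union> (if 0 \<in> B then space M - D else {})"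
      using True FL_sub[OF FL c'(1) D] by (auto simp: indicator_def)
    then show ?thesis using Dt by (simp add: sa.Un sa.Diff)
  next
    case False
    have "{\<omega> \<in> space M. indicator ({c..} \<times> D) (t, \<omega>) \<in> B} = (if 0 \<in> B then space M else {})"
      using False by (auto simp: indicator_def)
    then show ?thesis by auto
  qed
qed

lemma step_opt:
  assumes FL: "FL M H" and c': "0 \<le> c'" "c' \<le> c" and D: "D \<in> H c'"
  shows "{c..} \<times> D \<in> optional_sets M H"
proof -
  have "indicator ({c..} \<times> D) -` {1::real} \<inter> timedom M = {c..} \<times> D"
    using FL_sub[OF FL c'(1) D] c' by (auto simp: timedom_def indicator_def)
  moreover have "indicator ({c..} \<times> D) -` {1::real} \<inter> timedom M \<in> optional_sets M H"
    unfolding optional_sets_def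
    apply (rule sigma_sets.Basic)
    apply (rule CollectI)
    apply (rule exI[of _ "indicator ({c..} \<times> D)"])
    apply (rule exI[of _ "{1::real}"])
    using step_cadlag step_adapted[OF assms] by auto
  ultimately show ?thesis by simp
qed

lemma opt_Diff: "A \<in> optional_sets M H \<Longrightarrow> B \<in> optional_sets M H \<Longrightarrow> A - B \<in> optional_sets M H"
proof -
  interpret sigma_algebra "timedom M" "optional_sets M H" by (rule optional_sa)
  show "A \<in> optional_sets M H \<Longrightarrow> B \<in> optional_sets M H \<Longrightarrow> A - B \<in> optional_sets M H" by (rule Diff)
qed

lemma opt_UN: "(\<And>i::nat. A i \<in> optional_sets M H) \<Longrightarrow> (\<Union>i. A i) \<in> optional_sets M H"
  unfolding optional_sets_def by (rule sigma_sets.Union)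

lemma open_opt:
  assumes FL: "FL M H" and a: "0 \<le> a" and D: "D \<in> H a"
  shows "{a<..} \<times> D \<in> optional_sets M H"
proof -
  have "{a<..} \<times> D = (\<Union>n::nat. {a + 1/(Suc n)..} \<times> D)"
  proof (intro set_eqI iffI)
    fix x assume "x \<in> {a<..} \<times> D"
    then obtain t w where x: "x = (t,w)" "a < t" "w \<in> D" by auto
    then obtain n where "1 / real (Suc n) < t - a"
      by (metis diff_gt_0_iff_gt nat_approx_posE)
    then show "x \<in> (\<Union>n::nat. {a + 1/(Suc n)..} \<times> D)" using x by (intro UN_I[of n]) auto
  next
    fix x assume "x \<in> (\<Union>n::nat. {a + 1/(Suc n)..} \<times> D)"
    then obtain n where "x \<in> {a + 1/(Suc n)..} \<times> D" by auto
    then obtain t w where tw: "x = (t,w)" "a + 1/(1+real n) \<le> t" "w \<in> D" by auto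
    have "0 < 1/(1+real n)" by simp
    then have "a < t" using tw(2) by linarith
    then show "x \<in> {a<..} \<times> D" using tw by auto
  qed
  also have "\<dots> \<in> optional_sets M H"
    using a by (intro opt_UN step_opt[OF FL a _ D]) auto
  finally show ?thesis .
qed

lemma interval_opt:
  assumes FL: "FL M H" and a: "0 \<le> a" "a \<le> b" and D: "D \<in> H a"
  shows "{a<..b} \<times> D \<in> optional_sets M H"
proof -
  have "{a<..b} \<times> D = {a<..} \<times> D - {b<..} \<times> D" by auto
  also have "\<dots> \<in> optional_sets M H"
    using a by (intro opt_Diff open_opt[OF FL] FL_mono[OF FL _ _ D]) auto
  finally show ?thesis .
qed

lemma zero_opt:
  assumes FL: "FL M H" and D: "D \<in> H 0"
  shows "{0} \<times> D \<in> optional_sets M H"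
proof -
  have "{0::real} \<times> D = {0..} \<times> D - {0<..} \<times> D" by (auto simp: less_le)
  also have "\<dots> \<in> optional_sets M H"
    by (intro opt_Diff open_opt[OF FL _ D] step_opt[OF FL _ _ D]) auto
  finally show ?thesis .
qed

lemma pred_sub_opt:
  assumes FL: "FL M H"
  shows "predictable_sets M H \<subseteq> optional_sets M H"
  unfolding predictable_sets_def
  apply (rule sigma_algebra.sigma_sets_subset[OF optional_sa])
  apply (rule subsetI)
  apply (erule UnE)
   apply (clarsimp intro!: zero_opt[OF FL])
  apply clarsimp apply (erule (2) interval_opt[OF FL])
  done



lemma N_null_alt: "N_null M F \<tau> E \<longleftrightarrow> E \<in> Nsig M F \<tau> \<and> (\<exists>Z\<in>null_sets M. E \<subseteq> Z)"
  unfolding N_null_def by auto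

lemma N_null_empty: "N_null M F \<tau> {}"
  unfolding N_null_alt Nsig_def null_gen_def by (auto intro: sigma_sets.Empty)

lemma N_null_UN:
  assumes "\<And>i::nat. N_null M F \<tau> (E i)"
  shows "N_null M F \<tau> (\<Union>i. E i)"
proof -
  have "\<forall>i. \<exists>Z. Z \<in> null_sets M \<and> E i \<subseteq> Z" using assms unfolding N_null_alt by blast
  then obtain Z where Z: "\<And>i. Z i \<in> null_sets M" "\<And>i. E i \<subseteq> Z i" by metis
  have "(\<Union>i. E i) \<in> Nsig M F \<tau>"
    using assms unfolding N_null_alt Nsig_def null_gen_def by (intro sigma_sets.Union) auto
  moreover have "(\<Union>i. Z i) \<in> null_sets M" using Z(1) by auto
  moreover have "(\<Union>i. E i) \<subseteq> (\<Union>i. Z i)" using Z(2) by auto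
  ultimately show ?thesis unfolding N_null_alt by blast
qed

lemma N_null_Un:
  assumes "N_null M F \<tau> E1" "N_null M F \<tau> E2"
  shows "N_null M F \<tau> (E1 \<union> E2)"
proof -
  have "E1 \<union> E2 = (\<Union>i::nat. if i = 0 then E1 else E2)" by (auto split: if_splits)
  moreover have "N_null M F \<tau> (\<Union>i::nat. if i = 0 then E1 else E2)"
    using assms by (intro N_null_UN) auto
  ultimately show ?thesis by simp
qed

lemma Nsig_sp: "Nsig M F \<tau> \<subseteq> Pow (space M)"
  unfolding Nsig_def null_gen_def by (auto dest: sigma_sets_into_sp[rotated])

lemma NN:
  assumes "B \<in> Nsig M F \<tau>"
  shows "N_null M F \<tau> B \<or> N_null M F \<tau> (space M - B)"
  using assms unfolding Nsig_def null_gen_def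
proof (induction rule: sigma_sets.induct)
  case (Basic a)
  then show ?case unfolding N_null_def Nsig_def null_gen_def by blast
next
  case Empty
  then show ?case using N_null_empty by blast
next
  case (Compl a)
  have "a \<subseteq> space M" using Compl(1) by (auto dest: sigma_sets_into_sp[rotated])
  then have "space M - (space M - a) = a" by auto
  then show ?case using Compl by auto
next
  case (Union a)
  show ?case
  proof (cases "\<forall>i. N_null M F \<tau> (a i)")
    case True
    then show ?thesis using N_null_UN by blast
  next
    case False
    then obtain i where i: "N_null M F \<tau> (space M - a i)" using Union by blast
    have "space M - (\<Union>i. a i) \<in> Nsig M F \<tau>"
      unfolding Nsig_def null_gen_def by (intro sigma_sets.Compl sigma_sets.Union Union(1))
    moreover obtain Z where "Z \<in> null_sets M" "space M - a i \<subseteq> Z" using i unfolding N_null_alt by blast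
    moreover have "space M - (\<Union>i. a i) \<subseteq> space M - a i" by auto
    ultimately have "N_null M F \<tau> (space M - (\<Union>i. a i))" unfolding N_null_alt by blast
    then show ?thesis by blast
  qed
qed

lemma F_FL: "is_filtration M F \<Longrightarrow> FL M F"
  unfolding is_filtration_def FL_def by auto

lemma F_sub: "is_filtration M F \<Longrightarrow> 0 \<le> s \<Longrightarrow> F s \<subseteq> Pow (space M)"
  unfolding is_filtration_def using sets.sets_into_space by blast

lemma G_FL:
  assumes F: "is_filtration M F"
  shows "FL M (Gfilt M F \<tau>)"
  unfolding FL_def
proof (intro conjI allI impI)
  fix t :: real assume t: "0 \<le> t"
  have "(\<Inter>s\<in>{t<..}. sjoin M (F s) (sigma_rv M (\<lambda>\<omega>. min (\<tau> \<omega>) (ennreal s))))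
        \<subseteq> sjoin M (F (t+1)) (sigma_rv M (\<lambda>\<omega>. min (\<tau> \<omega>) (ennreal (t+1))))" by auto
  also have "\<dots> \<subseteq> Pow (space M)"
    unfolding sjoin_def
    by (rule subsetI, rule PowI, erule sigma_sets_into_sp[rotated])
       (use F_sub[OF F, of "t+1"] t in \<open>auto simp: sigma_rv_def\<close>)
  finally have "Nsig M F \<tau> \<union> (\<Inter>s\<in>{t<..}. sjoin M (F s) (sigma_rv M (\<lambda>\<omega>. min (\<tau> \<omega>) (ennreal s)))) \<subseteq> Pow (space M)"
    using Nsig_sp by blast
  then show "sigma_algebra (space M) (Gfilt M F \<tau> t)"
    unfolding Gfilt_def sjoin_def by (rule sigma_algebra_sigma_sets)
next
  fix s t :: real assume "0 \<le> s" "s \<le> t"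
  then show "Gfilt M F \<tau> s \<subseteq> Gfilt M F \<tau> t"
    unfolding Gfilt_def sjoin_def by (intro sigma_sets_mono') auto
qed



definition RS :: "'a measure \<Rightarrow> (real \<Rightarrow> 'a set set) \<Rightarrow> real \<Rightarrow> (ennreal \<times> 'a) set set" where
  "RS M F s = sigma_sets (UNIV \<times> space M) {R \<times> D | R D. R \<in> sets borel \<and> D \<in> F s}"

definition DP where
  "DP M F \<tau> s B E \<longleftrightarrow> N_null M F \<tau> E \<and> (\<exists>B1 C. B1 \<in> F s \<and> C \<in> RS M F s \<and>
     (\<forall>\<omega>\<in>space M - E. (ennreal s < \<tau> \<omega> \<longrightarrow> (\<omega> \<in> B \<longleftrightarrow> \<omega> \<in> B1)) \<and>
                        (\<tau> \<omega> \<le> ennreal s \<longrightarrow> (\<omega> \<in> B \<longleftrightarrow> (\<tau> \<omega>, \<omega>) \<in> C))))"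

lemma DP_Compl:
  assumes sa: "sigma_algebra (space M) (F s)" and "DP M F \<tau> s B E"
  shows "DP M F \<tau> s (space M - B) E"
proof -
  interpret sa: sigma_algebra "space M" "F s" by (rule sa)
  obtain B1 C where B: "N_null M F \<tau> E" "B1 \<in> F s" "C \<in> RS M F s"
    "\<forall>\<omega>\<in>space M - E. (ennreal s < \<tau> \<omega> \<longrightarrow> (\<omega> \<in> B \<longleftrightarrow> \<omega> \<in> B1)) \<and>
                        (\<tau> \<omega> \<le> ennreal s \<longrightarrow> (\<omega> \<in> B \<longleftrightarrow> (\<tau> \<omega>, \<omega>) \<in> C))"
    using assms(2) unfolding DP_def by blast
  show ?thesis unfolding DP_def
    apply (intro conjI B(1) exI[of _ "space M - B1"] exI[of _ "(UNIV \<times> space M) - C"])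
    using B(2) apply blast
    using B(3) unfolding RS_def apply (rule sigma_sets.Compl)
    using B(4) by auto
qed

lemma DP_UN:
  assumes sa: "sigma_algebra (space M) (F s)" and "\<And>i::nat. DP M F \<tau> s (B i) (E i)"
  shows "DP M F \<tau> s (\<Union>i. B i) (\<Union>i. E i)"
proof -
  interpret sa: sigma_algebra "space M" "F s" by (rule sa)
  have "\<forall>i. \<exists>p. fst p \<in> F s \<and> snd p \<in> RS M F s \<and>
     (\<forall>\<omega>\<in>space M - E i. (ennreal s < \<tau> \<omega> \<longrightarrow> (\<omega> \<in> B i \<longleftrightarrow> \<omega> \<in> fst p)) \<and>
                        (\<tau> \<omega> \<le> ennreal s \<longrightarrow> (\<omega> \<in> B i \<longleftrightarrow> (\<tau> \<omega>, \<omega>) \<in> snd p)))"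
    using assms(2) unfolding DP_def by force
  then obtain p where p: "\<And>i. fst (p i) \<in> F s" "\<And>i. snd (p i) \<in> RS M F s"
    "\<And>i. \<forall>\<omega>\<in>space M - E i. (ennreal s < \<tau> \<omega> \<longrightarrow> (\<omega> \<in> B i \<longleftrightarrow> \<omega> \<in> fst (p i))) \<and>
                        (\<tau> \<omega> \<le> ennreal s \<longrightarrow> (\<omega> \<in> B i \<longleftrightarrow> (\<tau> \<omega>, \<omega>) \<in> snd (p i)))"
    by metis
  have E: "N_null M F \<tau> (\<Union>i. E i)" using assms(2) unfolding DP_def by (intro N_null_UN) blast
  show ?thesis unfolding DP_def
    apply (intro conjI E exI[of _ "\<Union>i. fst (p i)"] exI[of _ "\<Union>i. snd (p i)"])
    using p(1) apply blast
    using p(2) unfolding RS_def apply (rule sigma_sets.Union)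
    using p(3) by blast
qed

lemma DP_J:
  assumes F: "is_filtration M F" and s: "0 \<le> s"
    and B: "B \<in> sigma_sets (space M) (F s \<union> sigma_rv M (\<lambda>\<omega>. min (\<tau> \<omega>) (ennreal s)))"
  shows "DP M F \<tau> s B {}"
  using B
proof (induction rule: sigma_sets.induct)
  case (Basic a)
  have sa: "sigma_algebra (space M) (F s)" using F s unfolding is_filtration_def by auto
  interpret sa: sigma_algebra "space M" "F s" by (rule sa)
  from Basic show ?case
  proof
    assume a: "a \<in> F s"
    have "a \<subseteq> space M" using a sa.sets_into_space by auto
    then show ?thesis unfolding DP_def RS_def
      by (intro conjI N_null_empty exI[of _ a] exI[of _ "UNIV \<times> a"] a sigma_sets.Basic)
         (auto intro!: exI[of _ UNIV] exI[of _ a] a)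
  next
    assume "a \<in> sigma_rv M (\<lambda>\<omega>. min (\<tau> \<omega>) (ennreal s))"
    then obtain R where R: "R \<in> sets borel" "a = (\<lambda>\<omega>. min (\<tau> \<omega>) (ennreal s)) -` R \<inter> space M"
      unfolding sigma_rv_def by blast
    show ?thesis unfolding DP_def RS_def
      apply (intro conjI N_null_empty exI[of _ "if ennreal s \<in> R then space M else {}"]
        exI[of _ "R \<times> space M"])
      using R by (auto intro!: sigma_sets.Basic simp: min_def)
  qed
next
  case Empty
  have sa: "sigma_algebra (space M) (F s)" using F s unfolding is_filtration_def by auto
  interpret sa: sigma_algebra "space M" "F s" by (rule sa)
  show ?case unfolding DP_def RS_def
    by (intro conjI N_null_empty exI[of _ "{}"] exI[of _ "{}"] sigma_sets.Empty sa.empty_sets) auto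
next
  case (Compl a)
  have sa: "sigma_algebra (space M) (F s)" using F s unfolding is_filtration_def by auto
  show ?case using DP_Compl[OF sa Compl(2)] .
next
  case (Union a)
  have sa: "sigma_algebra (space M) (F s)" using F s unfolding is_filtration_def by auto
  have "DP M F \<tau> s (\<Union>i. a i) (\<Union>i::nat. {})" using DP_UN[of M F s \<tau> a "\<lambda>_. {}", OF sa Union(2)] .
  then show ?case by simp
qed

lemma DEC:
  assumes F: "is_filtration M F" and u: "0 \<le> u" "u < s"
    and B: "B \<in> Gfilt M F \<tau> u"
  shows "\<exists>E. DP M F \<tau> s B E"
  using B unfolding Gfilt_def sjoin_def
proof (induction rule: sigma_sets.induct)
  case (Basic a)
  have sa: "sigma_algebra (space M) (F s)" using F u unfolding is_filtration_def by auto
  interpret sa: sigma_algebra "space M" "F s" by (rule sa)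
  from Basic show ?case
  proof
    assume "a \<in> Nsig M F \<tau>"
    then have "N_null M F \<tau> a \<or> N_null M F \<tau> (space M - a)" by (rule NN)
    then show ?thesis
    proof
      assume "N_null M F \<tau> a"
      then show ?thesis unfolding DP_def RS_def
        by (intro exI[of _ a] conjI exI[of _ "{}"]) (auto intro: sigma_sets.Empty)
    next
      assume "N_null M F \<tau> (space M - a)"
      then show ?thesis unfolding DP_def RS_def
        by (intro exI[of _ "space M - a"] conjI exI[of _ "space M"] exI[of _ "UNIV \<times> space M"])
           (auto intro: sigma_sets_top)
    qed
  next
    assume "a \<in> (\<Inter>s\<in>{u<..}. sigma_sets (space M) (F s \<union> sigma_rv M (\<lambda>\<omega>. min (\<tau> \<omega>) (ennreal s))))"
    then have "a \<in> sigma_sets (space M) (F s \<union> sigma_rv M (\<lambda>\<omega>. min (\<tau> \<omega>) (ennreal s)))"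
      using u by auto
    moreover have "0 \<le> s" using u by simp
    ultimately show ?thesis using DP_J[OF F] by blast
  qed
next
  case Empty
  have sa: "sigma_algebra (space M) (F s)" using F u unfolding is_filtration_def by auto
  interpret sa: sigma_algebra "space M" "F s" by (rule sa)
  show ?case unfolding DP_def RS_def
    by (intro exI[of _ "{}"] conjI N_null_empty exI[of _ "{}"] sigma_sets.Empty sa.empty_sets) auto
next
  case (Compl a)
  have sa: "sigma_algebra (space M) (F s)" using F u unfolding is_filtration_def by auto
  show ?case using DP_Compl[of M F s, OF sa] Compl(2) by blast
next
  case (Union a)
  have sa: "sigma_algebra (space M) (F s)" using F u unfolding is_filtration_def by auto
  from Union(2) obtain E where "\<And>i. DP M F \<tau> s (a i) (E i)" by metis
  then show ?case using DP_UN[of M F s \<tau> a E, OF sa] by blast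
qed



lemma RS_sub: "is_filtration M F \<Longrightarrow> 0 \<le> s \<Longrightarrow> {R \<times> D | R D. R \<in> sets borel \<and> D \<in> F s} \<subseteq> Pow (UNIV \<times> space M)"
  using F_sub by blast

lemma section_F:
  assumes F: "is_filtration M F" and s: "0 \<le> s" and C: "C \<in> RS M F s"
  shows "{\<omega> \<in> space M. (x, \<omega>) \<in> C} \<in> F s"
  using C unfolding RS_def
proof (induction rule: sigma_sets.induct)
  have sa: "sigma_algebra (space M) (F s)" using F s unfolding is_filtration_def by auto
  interpret sa: sigma_algebra "space M" "F s" by (rule sa)
  {
    case (Basic a)
    then obtain R D where a: "a = R \<times> D" "D \<in> F s" by blast
    have "D \<subseteq> space M" using a(2) sa.sets_into_space by auto
    then have "{\<omega> \<in> space M. (x, \<omega>) \<in> a} = (if x \<in> R then D else {})" using a by auto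
    then show ?case using a by auto
  next
    case Empty then show ?case by simp
  next
    case (Compl a)
    have "{\<omega> \<in> space M. (x, \<omega>) \<in> UNIV \<times> space M - a} = space M - {\<omega> \<in> space M. (x, \<omega>) \<in> a}" by auto
    then show ?case using Compl by auto
  next
    case (Union a)
    have "{\<omega> \<in> space M. (x, \<omega>) \<in> (\<Union>i. a i)} = (\<Union>i. {\<omega> \<in> space M. (x, \<omega>) \<in> a i})" by auto
    then show ?case using Union by auto
  }
qed

definition SL :: "real \<Rightarrow> real \<Rightarrow> (ennreal \<times> 'a) set \<Rightarrow> (ennreal \<times> (real \<times> 'a)) set" where
  "SL a b C = {p. a < fst (snd p) \<and> fst (snd p) \<le> b \<and> (fst p, snd (snd p)) \<in> C}"

lemma SL_meas:
  assumes F: "is_filtration M F" and a: "0 \<le> a" "a \<le> b" and C: "C \<in> RS M F a"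
  shows "SL a b C \<in> sets (borel \<Otimes>\<^sub>M optional_measure M F)"
  using C unfolding RS_def
proof (induction rule: sigma_sets.induct)
  have sa: "sigma_algebra (space M) (F a)" using F a unfolding is_filtration_def by auto
  interpret sa: sigma_algebra "space M" "F a" by (rule sa)
  have FL: "FL M F" using F by (rule F_FL)
  {
    case (Basic c)
    then obtain R D where c: "c = R \<times> D" "R \<in> sets borel" "D \<in> F a" by blast
    have "SL a b c = R \<times> ({a<..b} \<times> D)" using c unfolding SL_def by auto
    moreover have "{a<..b} \<times> D \<in> sets (optional_measure M F)"
      unfolding sets_OM using interval_opt[OF FL a c(3)] .
    ultimately show ?case using c by auto
  next
    case Empty then show ?case by (simp add: SL_def)
  next
    case (Compl c)
    have "SL a b (UNIV \<times> space M - c) = UNIV \<times> ({a<..b} \<times> space M) - SL a b c"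
      unfolding SL_def by auto
    moreover have "{a<..b} \<times> space M \<in> sets (optional_measure M F)"
      unfolding sets_OM using interval_opt[OF FL a sa.top] .
    ultimately show ?case using Compl by auto
  next
    case (Union c)
    have "SL a b (\<Union>i. c i) = (\<Union>i. SL a b (c i))" unfolding SL_def by auto
    then show ?case using Union by auto
  }
qed

lemma ex_sn_real: "u < (t::real) \<Longrightarrow> \<exists>n. u + 1 / real (Suc n) < t"
  by (metis add.commute diff_gt_0_iff_gt less_diff_eq nat_approx_posE)

lemma ex_sn:
  assumes "ennreal u < x" "0 \<le> u"
  shows "\<exists>n. ennreal (u + 1 / real (Suc n)) < x"
proof (cases x)
  case (real r)
  then have "u < r" using assms ennreal_less_iff by auto
  then obtain n where "u + 1 / real (Suc n) < r" using ex_sn_real by blast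
  moreover have "0 < r" using \<open>u < r\<close> assms(2) by linarith
  ultimately have "ennreal (u + 1 / real (Suc n)) < ennreal r" by (intro ennreal_lessI)
  then show ?thesis using real by blast
next
  case top
  then show ?thesis by auto
qed

lemma LIM_F0:
  assumes F: "is_filtration M F" and rc: "right_continuous_filtration F"
    and X: "\<And>n. X n \<in> F (1 / real (Suc n))"
  shows "(\<Union>k. \<Inter>n\<in>{k..}. X n) \<in> F 0"
proof -
  have "(\<Union>k. \<Inter>n\<in>{k..}. X n) \<in> F s" if s: "0 < s" for s
  proof -
    obtain m where m: "1 / real (Suc m) < s" using ex_sn_real[of 0 s] s by auto
    have sa: "sigma_algebra (space M) (F s)" using F s unfolding is_filtration_def by auto
    interpret sa: sigma_algebra "space M" "F s" by (rule sa)
    have eq: "(\<Union>k. \<Inter>n\<in>{k..}. X n) = (\<Union>k. \<Inter>n\<in>{k+m..}. X n)"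
    proof (intro set_eqI iffI)
      fix x assume "x \<in> (\<Union>k. \<Inter>n\<in>{k..}. X n)"
      then obtain k where "\<forall>n\<ge>k. x \<in> X n" by auto
      then show "x \<in> (\<Union>k. \<Inter>n\<in>{k+m..}. X n)" by (intro UN_I[of k]) auto
    next
      fix x assume "x \<in> (\<Union>k. \<Inter>n\<in>{k+m..}. X n)"
      then obtain k where "\<forall>n\<ge>k+m. x \<in> X n" by auto
      then show "x \<in> (\<Union>k. \<Inter>n\<in>{k..}. X n)" by (intro UN_I[of "k+m"]) auto
    qed
    have "X n \<in> F s" if "n \<ge> m" for n
    proof -
      have "1 / real (Suc n) \<le> 1 / real (Suc m)" using that by (simp add: frac_le)
      then have "1 / real (Suc n) \<le> s" using m by linarith
      moreover have "0 \<le> 1 / real (Suc n)" by simp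
      ultimately have "F (1 / real (Suc n)) \<subseteq> F s" using F unfolding is_filtration_def by blast
      then show ?thesis using X[of n] by blast
    qed
    then have "(\<Inter>n\<in>{k+m..}. X n) \<in> F s" for k
      by (intro sa.countable_INT') auto
    then have "(\<Union>k. \<Inter>n\<in>{k+m..}. X n) \<in> F s" by (intro sa.countable_UN) auto
    then show ?thesis unfolding eq .
  qed
  moreover have "F 0 = (\<Inter>s\<in>{0<..}. F s)" using rc unfolding right_continuous_filtration_def by simp
  ultimately show ?thesis by simp
qed



definition SPLw where
  "SPLw M F \<tau> A A' A'' E \<longleftrightarrow> A' \<in> optional_sets M F \<and> A'' \<in> sets (borel \<Otimes>\<^sub>M optional_measure M F) \<and>
     N_null M F \<tau> E \<and> (\<forall>\<omega>\<in>space M - E. \<forall>t\<ge>0.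
       ((t,\<omega>) \<in> A \<longleftrightarrow> (ennreal t < \<tau> \<omega> \<and> (t,\<omega>) \<in> A') \<or> (\<tau> \<omega> \<le> ennreal t \<and> (\<tau> \<omega>, (t,\<omega>)) \<in> A'')))"

definition SPL where
  "SPL M F \<tau> A \<longleftrightarrow> (\<exists>A' A'' E. SPLw M F \<tau> A A' A'' E)"

lemma SPL_empty: "SPL M F \<tau> {}"
  unfolding SPL_def SPLw_def
  apply (rule exI[of _ "{}"])
  apply (rule exI[of _ "{}"])
  apply (rule exI[of _ "{}"])
  using N_null_empty by (auto simp: optional_sets_def intro: sigma_sets.Empty)

lemma SPL_compl:
  assumes "SPL M F \<tau> A"
  shows "SPL M F \<tau> (timedom M - A)"
proof -
  obtain A' A'' E where "SPLw M F \<tau> A A' A'' E" using assms unfolding SPL_def by blast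
  then have A: "A' \<in> optional_sets M F" "A'' \<in> sets (borel \<Otimes>\<^sub>M optional_measure M F)"
    "N_null M F \<tau> E" "\<forall>\<omega>\<in>space M - E. \<forall>t\<ge>0.
       ((t,\<omega>) \<in> A \<longleftrightarrow> (ennreal t < \<tau> \<omega> \<and> (t,\<omega>) \<in> A') \<or> (\<tau> \<omega> \<le> ennreal t \<and> (\<tau> \<omega>, (t,\<omega>)) \<in> A''))"
    unfolding SPLw_def by simp_all
  have 1: "timedom M - A' \<in> optional_sets M F"
    using A(1) unfolding optional_sets_def by (rule sigma_sets.Compl)
  have 2: "(UNIV \<times> timedom M) - A'' \<in> sets (borel \<Otimes>\<^sub>M optional_measure M F)"
  proof -
    have "UNIV \<times> timedom M = space (borel \<Otimes>\<^sub>M optional_measure M F)"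
      by (simp add: space_pair_measure space_OM)
    then show ?thesis using A(2) sets.compl_sets by metis
  qed
  have 3: "\<forall>\<omega>\<in>space M - E. \<forall>t\<ge>0.
       ((t,\<omega>) \<in> timedom M - A \<longleftrightarrow> (ennreal t < \<tau> \<omega> \<and> (t,\<omega>) \<in> timedom M - A') \<or>
          (\<tau> \<omega> \<le> ennreal t \<and> (\<tau> \<omega>, (t,\<omega>)) \<in> UNIV \<times> timedom M - A''))"
  proof (intro ballI allI impI)
    fix \<omega> t assume w: "\<omega> \<in> space M - E" and t: "(0::real) \<le> t"
    have td: "(t, \<omega>) \<in> timedom M" using w t by (simp add: timedom_def)
    have e: "(t,\<omega>) \<in> A \<longleftrightarrow> (ennreal t < \<tau> \<omega> \<and> (t,\<omega>) \<in> A') \<or> (\<tau> \<omega> \<le> ennreal t \<and> (\<tau> \<omega>, (t,\<omega>)) \<in> A'')"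
      using A(4) w t by blast
    show "(t,\<omega>) \<in> timedom M - A \<longleftrightarrow> (ennreal t < \<tau> \<omega> \<and> (t,\<omega>) \<in> timedom M - A') \<or>
          (\<tau> \<omega> \<le> ennreal t \<and> (\<tau> \<omega>, (t,\<omega>)) \<in> UNIV \<times> timedom M - A'')"
    proof (cases "ennreal t < \<tau> \<omega>")
      case True
      then show ?thesis using e td by auto
    next
      case False
      then have "\<tau> \<omega> \<le> ennreal t" by simp
      then show ?thesis using e td False by auto
    qed
  qed
  show ?thesis unfolding SPL_def SPLw_def using 1 2 3 A(3) by blast
qed

lemma SPL_UN:
  assumes "\<And>i::nat. SPL M F \<tau> (A i)"
  shows "SPL M F \<tau> (\<Union>i. A i)"
proof -
  have "\<forall>i. \<exists>A' A'' E. SPLw M F \<tau> (A i) A' A'' E" using assms unfolding SPL_def by blast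
  then obtain f g h where p: "\<And>i. SPLw M F \<tau> (A i) (f i) (g i) (h i)" by metis
  have "(\<Union>i. f i) \<in> optional_sets M F" using p unfolding SPLw_def by (intro opt_UN) blast
  moreover have "(\<Union>i. g i) \<in> sets (borel \<Otimes>\<^sub>M optional_measure M F)"
    using p unfolding SPLw_def by (intro sets.countable_UN) blast
  moreover have "N_null M F \<tau> (\<Union>i. h i)" using p unfolding SPLw_def by (intro N_null_UN) blast
  moreover have "\<forall>\<omega>\<in>space M - (\<Union>i. h i). \<forall>t\<ge>0.
       ((t,\<omega>) \<in> (\<Union>i. A i) \<longleftrightarrow> (ennreal t < \<tau> \<omega> \<and> (t,\<omega>) \<in> (\<Union>i. f i)) \<or>
         (\<tau> \<omega> \<le> ennreal t \<and> (\<tau> \<omega>, (t,\<omega>)) \<in> (\<Union>i. g i)))"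
  proof (intro ballI allI impI)
    fix \<omega> t assume w: "\<omega> \<in> space M - (\<Union>i. h i)" and t: "(0::real) \<le> t"
    have e: "\<And>i. (t,\<omega>) \<in> A i \<longleftrightarrow> (ennreal t < \<tau> \<omega> \<and> (t,\<omega>) \<in> f i) \<or> (\<tau> \<omega> \<le> ennreal t \<and> (\<tau> \<omega>, (t,\<omega>)) \<in> g i)"
      using p w t unfolding SPLw_def by blast
    show "(t,\<omega>) \<in> (\<Union>i. A i) \<longleftrightarrow> (ennreal t < \<tau> \<omega> \<and> (t,\<omega>) \<in> (\<Union>i. f i)) \<or>
         (\<tau> \<omega> \<le> ennreal t \<and> (\<tau> \<omega>, (t,\<omega>)) \<in> (\<Union>i. g i))"
      using e by blast
  qed
  ultimately show ?thesis unfolding SPL_def SPLw_def by blast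
qed



definition DPw where
  "DPw M F \<tau> s B E B1 C \<longleftrightarrow> N_null M F \<tau> E \<and> B1 \<in> F s \<and> C \<in> RS M F s \<and>
     (\<forall>\<omega>\<in>space M - E. (ennreal s < \<tau> \<omega> \<longrightarrow> (\<omega> \<in> B \<longleftrightarrow> \<omega> \<in> B1)) \<and>
                        (\<tau> \<omega> \<le> ennreal s \<longrightarrow> (\<omega> \<in> B \<longleftrightarrow> (\<tau> \<omega>, \<omega>) \<in> C)))"

lemma DP_DPw: "DP M F \<tau> s B E \<longleftrightarrow> (\<exists>B1 C. DPw M F \<tau> s B E B1 C)"
  unfolding DP_def DPw_def by blast

lemma DEC_seq:
  assumes F: "is_filtration M F" and u: "0 \<le> u" and B: "B \<in> Gfilt M F \<tau> u"
  shows "\<exists>E B1 C. \<forall>n. DPw M F \<tau> (u + 1 / real (Suc n)) B (E n) (B1 n) (C n)"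
proof -
  have "\<forall>n. \<exists>E B1 C. DPw M F \<tau> (u + 1 / real (Suc n)) B E B1 C"
  proof
    fix n
    have "u < u + 1 / real (Suc n)" by simp
    then obtain E where "DP M F \<tau> (u + 1 / real (Suc n)) B E" using DEC[OF F u(1) _ B] by blast
    then show "\<exists>E B1 C. DPw M F \<tau> (u + 1 / real (Suc n)) B E B1 C" unfolding DP_DPw by blast
  qed
  then show ?thesis by metis
qed

lemma gen_zero:
  assumes F: "is_filtration M F" and rc: "right_continuous_filtration F"
    and B: "B \<in> Gfilt M F \<tau> 0"
  shows "SPL M F \<tau> ({0} \<times> B)"
proof -
  define s where "s n = 1 / real (Suc n)" for n
  obtain E B1 C where P: "\<And>n. DPw M F \<tau> (s n) B (E n) (B1 n) (C n)"
    using DEC_seq[OF F _ B] unfolding s_def by auto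
  have s_pos: "0 \<le> s n" for n unfolding s_def by simp
  have hE: "\<And>n. N_null M F \<tau> (E n)" and hB1: "\<And>n. B1 n \<in> F (s n)" and hC: "\<And>n. C n \<in> RS M F (s n)"
    and hB: "\<And>n. \<forall>\<omega>\<in>space M - E n. (ennreal (s n) < \<tau> \<omega> \<longrightarrow> (\<omega> \<in> B \<longleftrightarrow> \<omega> \<in> B1 n)) \<and>
                        (\<tau> \<omega> \<le> ennreal (s n) \<longrightarrow> (\<omega> \<in> B \<longleftrightarrow> (\<tau> \<omega>, \<omega>) \<in> C n))"
    using P unfolding DPw_def by blast+
  define Dn where "Dn n = {\<omega> \<in> space M. (0, \<omega>) \<in> C n}" for n
  define D1 where "D1 = (\<Union>k. \<Inter>n\<in>{k..}. B1 n)"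
  define D2 where "D2 = (\<Union>k. \<Inter>n\<in>{k..}. Dn n)"
  have D1: "D1 \<in> F 0" unfolding D1_def using hB1 by (intro LIM_F0[OF F rc]) (simp add: s_def)
  have D2: "D2 \<in> F 0" unfolding D2_def Dn_def
    using section_F[OF F s_pos hC] by (intro LIM_F0[OF F rc]) (simp add: s_def)
  have FL: "FL M F" using F by (rule F_FL)
  have A1: "{0} \<times> D1 \<in> optional_sets M F" using zero_opt[OF FL D1] .
  have A2: "UNIV \<times> ({0} \<times> D2) \<in> sets (borel \<Otimes>\<^sub>M optional_measure M F)"
    using zero_opt[OF FL D2] by (intro pair_measureI) (auto simp: sets_OM)
  have EE: "N_null M F \<tau> (\<Union>n. E n)" using hE by (rule N_null_UN)
  have main: "\<forall>\<omega>\<in>space M - (\<Union>n. E n). \<forall>t\<ge>0.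
       ((t,\<omega>) \<in> {0} \<times> B \<longleftrightarrow> (ennreal t < \<tau> \<omega> \<and> (t,\<omega>) \<in> {0} \<times> D1) \<or>
          (\<tau> \<omega> \<le> ennreal t \<and> (\<tau> \<omega>, (t,\<omega>)) \<in> UNIV \<times> ({0} \<times> D2)))"
  proof (intro ballI allI impI)
    fix \<omega> and t :: real assume w: "\<omega> \<in> space M - (\<Union>n. E n)" and t: "0 \<le> t"
    have wn: "\<And>n. \<omega> \<in> space M - E n" using w by blast
    show "(t,\<omega>) \<in> {0} \<times> B \<longleftrightarrow> (ennreal t < \<tau> \<omega> \<and> (t,\<omega>) \<in> {0} \<times> D1) \<or>
          (\<tau> \<omega> \<le> ennreal t \<and> (\<tau> \<omega>, (t,\<omega>)) \<in> UNIV \<times> ({0} \<times> D2))"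
    proof (cases "t = 0")
      case False
      then show ?thesis by simp
    next
      case t0: True
      show ?thesis
      proof (cases "0 < \<tau> \<omega>")
        case True
        then obtain n0 where n0: "ennreal (0 + s n0) < \<tau> \<omega>" using ex_sn[of 0 "\<tau> \<omega>"] unfolding s_def by auto
        have eq: "\<omega> \<in> B \<longleftrightarrow> \<omega> \<in> B1 n" if "n \<ge> n0" for n
        proof -
          have "s n \<le> s n0" using that unfolding s_def by (simp add: frac_le)
          then have "ennreal (s n) \<le> ennreal (s n0)" by (rule ennreal_leI)
          then have "ennreal (s n) < \<tau> \<omega>" using n0 by simp
          then show ?thesis using hB[of n] wn[of n] by blast
        qed
        have "\<omega> \<in> B \<longleftrightarrow> \<omega> \<in> D1"
        proof
          assume "\<omega> \<in> B" then show "\<omega> \<in> D1" unfolding D1_def using eq by blast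
        next
          assume "\<omega> \<in> D1"
          then obtain k where "\<forall>n\<ge>k. \<omega> \<in> B1 n" unfolding D1_def by blast
          then have "\<omega> \<in> B1 (max k n0)" by simp
          then show "\<omega> \<in> B" using eq[of "max k n0"] by simp
        qed
        then show ?thesis using t0 True by (auto simp: order.strict_iff_order)
      next
        case False
        then have tau0: "\<tau> \<omega> = 0" by simp
        have eq: "\<omega> \<in> B \<longleftrightarrow> \<omega> \<in> Dn n" for n
        proof -
          have "\<tau> \<omega> \<le> ennreal (s n)" using tau0 by simp
          then show ?thesis using hB[of n] wn[of n] tau0 unfolding Dn_def by auto
        qed
        have "\<omega> \<in> B \<longleftrightarrow> \<omega> \<in> D2"
        proof
          assume "\<omega> \<in> B" then show "\<omega> \<in> D2" unfolding D2_def using eq by blast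
        next
          assume "\<omega> \<in> D2"
          then obtain k where "\<forall>n\<ge>k. \<omega> \<in> Dn n" unfolding D2_def by blast
          then show "\<omega> \<in> B" using eq[of k] by simp
        qed
        then show ?thesis using t0 tau0 by simp
      qed
    qed
  qed
  show ?thesis unfolding SPL_def SPLw_def using A1 A2 EE main by blast
qed



lemma gen_int:
  assumes F: "is_filtration M F" and u: "0 \<le> u" "u \<le> v"
    and B: "B \<in> Gfilt M F \<tau> u"
  shows "SPL M F \<tau> ({u<..v} \<times> B)"
proof -
  define s where "s n = u + 1 / real (Suc n)" for n
  define b where "b n = max (s n) v" for n
  obtain E B1 C where P: "\<And>n. DPw M F \<tau> (s n) B (E n) (B1 n) (C n)"
    using DEC_seq[OF F u(1) B] unfolding s_def by auto
  have s_pos: "0 \<le> s n" for n unfolding s_def using u by simp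
  have s_gt: "u < s n" for n unfolding s_def by simp
  have sb: "s n \<le> b n" for n unfolding b_def by simp
  have hE: "\<And>n. N_null M F \<tau> (E n)" and hB1: "\<And>n. B1 n \<in> F (s n)" and hC: "\<And>n. C n \<in> RS M F (s n)"
    and hB: "\<And>n. \<forall>\<omega>\<in>space M - E n. (ennreal (s n) < \<tau> \<omega> \<longrightarrow> (\<omega> \<in> B \<longleftrightarrow> \<omega> \<in> B1 n)) \<and>
                        (\<tau> \<omega> \<le> ennreal (s n) \<longrightarrow> (\<omega> \<in> B \<longleftrightarrow> (\<tau> \<omega>, \<omega>) \<in> C n))"
    using P unfolding DPw_def by blast+
  have FL: "FL M F" using F by (rule F_FL)
  define A' where "A' = (\<Union>n. {s n<..b n} \<times> B1 n)"
  define A'' where "A'' = (\<Union>n. (SL (s n) (b n) (C n) \<inter> ({..ennreal u} \<times> timedom M)) \<union>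
                               ({ennreal (s n)<..} \<times> ({s n<..b n} \<times> B1 n)))"
  have A1: "A' \<in> optional_sets M F" unfolding A'_def
    by (intro opt_UN interval_opt[OF FL s_pos sb hB1])
  have td: "timedom M \<in> sets (optional_measure M F)"
    using sets.top[of "optional_measure M F"] by (simp add: space_OM)
  have A2n: "(SL (s n) (b n) (C n) \<inter> ({..ennreal u} \<times> timedom M)) \<union>
                               ({ennreal (s n)<..} \<times> ({s n<..b n} \<times> B1 n)) \<in> sets (borel \<Otimes>\<^sub>M optional_measure M F)" for n
  proof -
    have 1: "SL (s n) (b n) (C n) \<in> sets (borel \<Otimes>\<^sub>M optional_measure M F)"
      by (rule SL_meas[OF F s_pos sb hC])
    have 2: "{..ennreal u} \<times> timedom M \<in> sets (borel \<Otimes>\<^sub>M optional_measure M F)"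
      using td by (intro pair_measureI) auto
    have 3: "{ennreal (s n)<..} \<times> ({s n<..b n} \<times> B1 n) \<in> sets (borel \<Otimes>\<^sub>M optional_measure M F)"
      using interval_opt[OF FL s_pos sb hB1] by (intro pair_measureI) (auto simp: sets_OM)
    show ?thesis using 1 2 3 by auto
  qed
  have A2: "A'' \<in> sets (borel \<Otimes>\<^sub>M optional_measure M F)" unfolding A''_def
    using A2n by auto
  have EE: "N_null M F \<tau> (\<Union>n. E n)" using hE by (rule N_null_UN)
  have main: "\<forall>\<omega>\<in>space M - (\<Union>n. E n). \<forall>t\<ge>0.
       ((t,\<omega>) \<in> {u<..v} \<times> B \<longleftrightarrow> (ennreal t < \<tau> \<omega> \<and> (t,\<omega>) \<in> A') \<or>
          (\<tau> \<omega> \<le> ennreal t \<and> (\<tau> \<omega>, (t,\<omega>)) \<in> A''))"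
  proof (intro ballI allI impI)
    fix \<omega> and t :: real assume w: "\<omega> \<in> space M - (\<Union>n. E n)" and t: "0 \<le> t"
    have wn: "\<And>n. \<omega> \<in> space M - E n" using w by blast
    have tdw: "(t, \<omega>) \<in> timedom M" using w t by (simp add: timedom_def)
    have memA': "(t,\<omega>) \<in> A' \<longleftrightarrow> (\<exists>n. s n < t \<and> t \<le> v \<and> \<omega> \<in> B1 n)"
      unfolding A'_def b_def by auto
    have memA'': "(\<tau> \<omega>, (t,\<omega>)) \<in> A'' \<longleftrightarrow> (\<exists>n. s n < t \<and> t \<le> v \<and>
        ((\<tau> \<omega> \<le> ennreal u \<and> (\<tau> \<omega>, \<omega>) \<in> C n) \<or> (ennreal (s n) < \<tau> \<omega> \<and> \<omega> \<in> B1 n)))"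
      unfolding A''_def b_def SL_def using tdw by auto
    show "(t,\<omega>) \<in> {u<..v} \<times> B \<longleftrightarrow> (ennreal t < \<tau> \<omega> \<and> (t,\<omega>) \<in> A') \<or>
          (\<tau> \<omega> \<le> ennreal t \<and> (\<tau> \<omega>, (t,\<omega>)) \<in> A'')"
    proof (cases "ennreal t < \<tau> \<omega>")
      case True
      have "(t,\<omega>) \<in> {u<..v} \<times> B \<longleftrightarrow> (t,\<omega>) \<in> A'"
      proof
        assume "(t,\<omega>) \<in> {u<..v} \<times> B"
        then have tw: "u < t" "t \<le> v" "\<omega> \<in> B" by auto
        obtain n where n: "u + 1 / real (Suc n) < t" using ex_sn_real[OF tw(1)] by blast
        then have "s n < t" unfolding s_def .
        then have "ennreal (s n) < ennreal t" using s_pos by (simp add: ennreal_less_iff)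
        then have "ennreal (s n) < \<tau> \<omega>" using True by simp
        then have "\<omega> \<in> B1 n" using hB[of n] wn[of n] tw(3) by blast
        then show "(t,\<omega>) \<in> A'" unfolding memA' using \<open>s n < t\<close> tw by blast
      next
        assume "(t,\<omega>) \<in> A'"
        then obtain n where n: "s n < t" "t \<le> v" "\<omega> \<in> B1 n" unfolding memA' by blast
        then have "ennreal (s n) < ennreal t" using s_pos by (simp add: ennreal_less_iff)
        then have "ennreal (s n) < \<tau> \<omega>" using True by simp
        then have "\<omega> \<in> B" using hB[of n] wn[of n] n(3) by blast
        moreover have "u < t" using s_gt[of n] n(1) by simp
        ultimately show "(t,\<omega>) \<in> {u<..v} \<times> B" using n(2) by simp
      qed
      then show ?thesis using True by (auto simp: not_le)
    next
      case False
      then have le: "\<tau> \<omega> \<le> ennreal t" by simp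
      have "(t,\<omega>) \<in> {u<..v} \<times> B \<longleftrightarrow> (\<tau> \<omega>, (t,\<omega>)) \<in> A''"
      proof
        assume "(t,\<omega>) \<in> {u<..v} \<times> B"
        then have tw: "u < t" "t \<le> v" "\<omega> \<in> B" by auto
        show "(\<tau> \<omega>, (t,\<omega>)) \<in> A''"
        proof (cases "\<tau> \<omega> \<le> ennreal u")
          case True
          obtain n where n: "u + 1 / real (Suc n) < t" using ex_sn_real[OF tw(1)] by blast
          then have "s n < t" unfolding s_def .
          have "ennreal u \<le> ennreal (s n)" using s_gt[of n] by (intro ennreal_leI) simp
          then have "\<tau> \<omega> \<le> ennreal (s n)" using True by simp
          then have "(\<tau> \<omega>, \<omega>) \<in> C n" using hB[of n] wn[of n] tw(3) by blast
          then show ?thesis unfolding memA'' using True \<open>s n < t\<close> tw by blast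
        next
          case False
          then have "ennreal u < \<tau> \<omega>" by simp
          then obtain n where n: "ennreal (u + 1 / real (Suc n)) < \<tau> \<omega>" using ex_sn u by blast
          then have n': "ennreal (s n) < \<tau> \<omega>" unfolding s_def .
          then have "ennreal (s n) < ennreal t" using le by simp
          then have "s n < t" using s_pos by (simp add: ennreal_less_iff)
          moreover have "\<omega> \<in> B1 n" using hB[of n] wn[of n] tw(3) n' by blast
          ultimately show ?thesis unfolding memA'' using n' tw by blast
        qed
      next
        assume "(\<tau> \<omega>, (t,\<omega>)) \<in> A''"
        then obtain n where n: "s n < t" "t \<le> v"
          "(\<tau> \<omega> \<le> ennreal u \<and> (\<tau> \<omega>, \<omega>) \<in> C n) \<or> (ennreal (s n) < \<tau> \<omega> \<and> \<omega> \<in> B1 n)"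
          unfolding memA'' by blast
        have "u < t" using s_gt[of n] n(1) by simp
        moreover have "\<omega> \<in> B" using n(3)
        proof
          assume a: "\<tau> \<omega> \<le> ennreal u \<and> (\<tau> \<omega>, \<omega>) \<in> C n"
          have "ennreal u \<le> ennreal (s n)" using s_gt[of n] by (intro ennreal_leI) simp
          then have "\<tau> \<omega> \<le> ennreal (s n)" using conjunct1[OF a] by (meson order_trans)
          then show "\<omega> \<in> B" using hB[of n] wn[of n] a by blast
        next
          assume a: "ennreal (s n) < \<tau> \<omega> \<and> \<omega> \<in> B1 n"
          then show "\<omega> \<in> B" using hB[of n] wn[of n] by blast
        qed
        ultimately show "(t,\<omega>) \<in> {u<..v} \<times> B" using n(2) by simp
      qed
      then show ?thesis using False le by simp
    qed
  qed
  show ?thesis unfolding SPL_def SPLw_def using A1 A2 EE main by blast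
qed

lemma SPL_pred:
  assumes F: "is_filtration M F" and rc: "right_continuous_filtration F"
    and A: "A \<in> predictable_sets M (Gfilt M F \<tau>)"
  shows "SPL M F \<tau> A"
  using A unfolding predictable_sets_def
proof (induction rule: sigma_sets.induct)
  case (Basic a)
  then show ?case using gen_zero[OF F rc] gen_int[OF F] by blast
next
  case Empty then show ?case by (rule SPL_empty)
next
  case (Compl a) then show ?case using SPL_compl[OF Compl(2)] by simp
next
  case (Union a) then show ?case using SPL_UN[OF Union(2)] by simp
qed



theorem mainTheorem4:
  fixes M :: "'a measure" and F :: "real \<Rightarrow> 'a set set" and \<tau> :: "'a \<Rightarrow> ennreal"
    and A :: "(real \<times> 'a) set"
  assumes "prob_space M"
    and "is_filtration M F"
    and "right_continuous_filtration F"
    and "null_gen M (F_infty M F) \<subseteq> F 0"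
    and "\<tau> \<in> borel_measurable M"
    and "A \<in> predictable_sets M (Gfilt M F \<tau>)"
  shows "A \<in> L_o M F \<tau> \<longleftrightarrow>
    (\<forall>Y. optional_process M (Gfilt M F \<tau>) Y \<longrightarrow>
         global_splitting M F \<tau> (\<lambda>p. Y p * indicator A p))"
proof -
  note F = assms(2) and rc = assms(3) and Ap = assms(6)
  have Aopt: "A \<in> optional_sets M (Gfilt M F \<tau>)"
    using pred_sub_opt[OF G_FL[OF F]] Ap by blast
  show ?thesis
  proof
    assume AL: "A \<in> L_o M F \<tau>"
    show "\<forall>Y. optional_process M (Gfilt M F \<tau>) Y \<longrightarrow> global_splitting M F \<tau> (\<lambda>p. Y p * indicator A p)"
    proof (intro allI impI)
      fix Y assume Y: "optional_process M (Gfilt M F \<tau>) Y"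
      then have "splitting_on M F \<tau> Y A" using AL unfolding L_o_def by blast
      then obtain Y' Y'' E1 where Y': "optional_process M F Y'"
        and Y'': "(\<lambda>(u, p). Y'' u p) \<in> borel_measurable (borel \<Otimes>\<^sub>M optional_measure M F)"
        and E1: "N_null M F \<tau> E1"
        and h1: "\<forall>\<omega>\<in>space M - E1. \<forall>t\<ge>0.
              Y (t, \<omega>) * indicator A (t, \<omega>) =
              (Y' (t, \<omega>) * indicator {p. ennreal (fst p) < \<tau> (snd p)} (t, \<omega>)
               + Y'' (\<tau> \<omega>) (t, \<omega>) * indicator {p. \<tau> (snd p) \<le> ennreal (fst p)} (t, \<omega>))
              * indicator A (t, \<omega>)"
        unfolding splitting_on_def by blast
      obtain A' A'' E2 where "SPLw M F \<tau> A A' A'' E2"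
        using SPL_pred[OF F rc Ap] unfolding SPL_def by blast
      then have A': "A' \<in> optional_sets M F" and A'': "A'' \<in> sets (borel \<Otimes>\<^sub>M optional_measure M F)"
        and E2: "N_null M F \<tau> E2"
        and h2: "\<forall>\<omega>\<in>space M - E2. \<forall>t\<ge>0.
       ((t,\<omega>) \<in> A \<longleftrightarrow> (ennreal t < \<tau> \<omega> \<and> (t,\<omega>) \<in> A') \<or> (\<tau> \<omega> \<le> ennreal t \<and> (\<tau> \<omega>, (t,\<omega>)) \<in> A''))"
        unfolding SPLw_def by simp_all
      define Z' where "Z' = (\<lambda>p. Y' p * indicator A' p :: real)"
      define Z'' where "Z'' = (\<lambda>u p. Y'' u p * indicator A'' (u, p) :: real)"
      have Z': "optional_process M F Z'"
        unfolding optional_process_iff Z'_def using Y' A'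
        unfolding optional_process_iff by (intro borel_measurable_times borel_measurable_indicator) (auto simp: sets_OM)
      have "(\<lambda>(u, p). Z'' u p) = (\<lambda>x. (\<lambda>(u, p). Y'' u p) x * indicator A'' x)"
        unfolding Z''_def by auto
      then have Z'': "(\<lambda>(u, p). Z'' u p) \<in> borel_measurable (borel \<Otimes>\<^sub>M optional_measure M F)"
        using Y'' A'' by (simp add: borel_measurable_times borel_measurable_indicator)
      have E: "N_null M F \<tau> (E1 \<union> E2)" using E1 E2 by (rule N_null_Un)
      have h: "\<forall>\<omega>\<in>space M - (E1 \<union> E2). \<forall>t\<ge>0.
              (Y (t, \<omega>) * indicator A (t, \<omega>)) * indicator (timedom M) (t, \<omega>) =
              (Z' (t, \<omega>) * indicator {p. ennreal (fst p) < \<tau> (snd p)} (t, \<omega>)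
               + Z'' (\<tau> \<omega>) (t, \<omega>) * indicator {p. \<tau> (snd p) \<le> ennreal (fst p)} (t, \<omega>))
              * indicator (timedom M) (t, \<omega>)"
      proof (intro ballI allI impI)
        fix \<omega> and t :: real assume w: "\<omega> \<in> space M - (E1 \<union> E2)" and t: "0 \<le> t"
        have td: "(t, \<omega>) \<in> timedom M" using w t by (simp add: timedom_def)
        have e1: "Y (t, \<omega>) * indicator A (t, \<omega>) =
              (Y' (t, \<omega>) * indicator {p. ennreal (fst p) < \<tau> (snd p)} (t, \<omega>)
               + Y'' (\<tau> \<omega>) (t, \<omega>) * indicator {p. \<tau> (snd p) \<le> ennreal (fst p)} (t, \<omega>))
              * indicator A (t, \<omega>)" using h1 w t by blast
        have e2: "(t,\<omega>) \<in> A \<longleftrightarrow> (ennreal t < \<tau> \<omega> \<and> (t,\<omega>) \<in> A') \<or> (\<tau> \<omega> \<le> ennreal t \<and> (\<tau> \<omega>, (t,\<omega>)) \<in> A'')"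
          using h2 w t by blast
        show "(Y (t, \<omega>) * indicator A (t, \<omega>)) * indicator (timedom M) (t, \<omega>) =
              (Z' (t, \<omega>) * indicator {p. ennreal (fst p) < \<tau> (snd p)} (t, \<omega>)
               + Z'' (\<tau> \<omega>) (t, \<omega>) * indicator {p. \<tau> (snd p) \<le> ennreal (fst p)} (t, \<omega>))
              * indicator (timedom M) (t, \<omega>)"
        proof (cases "ennreal t < \<tau> \<omega>")
          case True
          then have "\<not> \<tau> \<omega> \<le> ennreal t" by simp
          then show ?thesis using e1 e2 True td unfolding Z'_def Z''_def
            by (auto simp: indicator_def split: if_splits)
        next
          case False
          then have "\<tau> \<omega> \<le> ennreal t" by simp
          then show ?thesis using e1 e2 False td unfolding Z'_def Z''_def
            by (auto simp: indicator_def split: if_splits)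
        qed
      qed
      show "global_splitting M F \<tau> (\<lambda>p. Y p * indicator A p)"
        unfolding global_splitting_def splitting_on_def
        using Z' Z'' E h by blast
    qed
  next
    assume R: "\<forall>Y. optional_process M (Gfilt M F \<tau>) Y \<longrightarrow> global_splitting M F \<tau> (\<lambda>p. Y p * indicator A p)"
    have "splitting_on M F \<tau> Y A" if Y: "optional_process M (Gfilt M F \<tau>) Y" for Y
    proof -
      obtain Y' Y'' E where Y': "optional_process M F Y'"
        and Y'': "(\<lambda>(u, p). Y'' u p) \<in> borel_measurable (borel \<Otimes>\<^sub>M optional_measure M F)"
        and E: "N_null M F \<tau> E"
        and h: "\<forall>\<omega>\<in>space M - E. \<forall>t\<ge>0.
              (Y (t, \<omega>) * indicator A (t, \<omega>)) * indicator (timedom M) (t, \<omega>) =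
              (Y' (t, \<omega>) * indicator {p. ennreal (fst p) < \<tau> (snd p)} (t, \<omega>)
               + Y'' (\<tau> \<omega>) (t, \<omega>) * indicator {p. \<tau> (snd p) \<le> ennreal (fst p)} (t, \<omega>))
              * indicator (timedom M) (t, \<omega>)"
        using R Y unfolding global_splitting_def splitting_on_def by blast
      have "\<forall>\<omega>\<in>space M - E. \<forall>t\<ge>0.
              Y (t, \<omega>) * indicator A (t, \<omega>) =
              (Y' (t, \<omega>) * indicator {p. ennreal (fst p) < \<tau> (snd p)} (t, \<omega>)
               + Y'' (\<tau> \<omega>) (t, \<omega>) * indicator {p. \<tau> (snd p) \<le> ennreal (fst p)} (t, \<omega>))
              * indicator A (t, \<omega>)"
      proof (intro ballI allI impI)
        fix \<omega> and t :: real assume w: "\<omega> \<in> space M - E" and t: "0 \<le> t"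
        have td: "(t, \<omega>) \<in> timedom M" using w t by (simp add: timedom_def)
        have e: "(Y (t, \<omega>) * indicator A (t, \<omega>)) * indicator (timedom M) (t, \<omega>) =
              (Y' (t, \<omega>) * indicator {p. ennreal (fst p) < \<tau> (snd p)} (t, \<omega>)
               + Y'' (\<tau> \<omega>) (t, \<omega>) * indicator {p. \<tau> (snd p) \<le> ennreal (fst p)} (t, \<omega>))
              * indicator (timedom M) (t, \<omega>)" using h w t by blast
        then show "Y (t, \<omega>) * indicator A (t, \<omega>) =
              (Y' (t, \<omega>) * indicator {p. ennreal (fst p) < \<tau> (snd p)} (t, \<omega>)
               + Y'' (\<tau> \<omega>) (t, \<omega>) * indicator {p. \<tau> (snd p) \<le> ennreal (fst p)} (t, \<omega>))
              * indicator A (t, \<omega>)"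
          using td by (cases "(t, \<omega>) \<in> A") simp_all
      qed
      then show ?thesis unfolding splitting_on_def using Y' Y'' E by blast
    qed
    then show "A \<in> L_o M F \<tau>" unfolding L_o_def using Aopt by blast
  qed
qed

end
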